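(* Let $Y$ be a $2$-dimensional $3$-partite weighted simplicial complex with parts $Y(0)=Y[1]\sqcup Y[2]\sqcup Y[3]$. Suppose that for every $v\in Y[1]$, the link $Y_v$ (a bipartite graph between $Y_v[2]$ and $Y_v[3]$) is an $\eta$-bipartite expander. For $i\neq j$, let $A^{i,j}$ be the bipartite operator of the bipartite graph between $Y[i]$ and $Y[j]$. Then $$\lambda(A^{2,3})\le\eta+\lambda(A^{1,2})\,\lambda(A^{1,3}).$$
   Context: **Weighted complex.** $Y$ is weighted by a probability distribution on its triangles $Y(2)$, every triangle having one vertex in each part. This distribution induces measures on edges and vertices by taking a uniformly random sub-face. Link measures are conditional measures. **Bipartite graphs.** The bipartite graph between $Y[i]$ and $Y[j]$ has edges the edges of $Y$ with one endpoint in each of these parts, weighted by the induced measure. **Bipartite expansion.** For a bipartite graph with edge distribution and bipartite operator $Bf(v)=\mathbb E_{w\sim v}f(w)$, let $\lambda(B)=\sup\{\langle Bf,g\rangle:\|f\|=\|g\|=1,\ f\perp\text{constants}\}$. The graph is an $\eta$-bipartite expander if $\lambda(B)\le\eta$. *)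

theory Defs
  imports Main "HOL-Library.Extended_Real" Complex_Main
begin

text \<open>A weighted bipartite graph between (finite) vertex types 'u and 'v is given by
  its edge distribution mu on pairs (u,v). Vertex measures are the marginals.\<close>

definition left_marg :: "('u::finite \<times> 'v::finite \<Rightarrow> real) \<Rightarrow> 'u \<Rightarrow> real" where
  "left_marg mu u = (\<Sum>v\<in>UNIV. mu (u, v))"

definition right_marg :: "('u::finite \<times> 'v::finite \<Rightarrow> real) \<Rightarrow> 'v \<Rightarrow> real" where
  "right_marg mu v = (\<Sum>u\<in>UNIV. mu (u, v))"

text \<open>Bipartite operator: Bf(u) = E_{v ~ u} f(v), i.e. the conditional expectation
  along the edge distribution given the endpoint u (0 on vertices of measure 0).\<close>

definition bip_op :: "('u::finite \<times> 'v::finite \<Rightarrow> real) \<Rightarrow> ('v \<Rightarrow> real) \<Rightarrow> 'u \<Rightarrow> real" where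
  "bip_op mu f u = (\<Sum>v\<in>UNIV. mu (u, v) * f v) / left_marg mu u"

definition inner_L :: "('u::finite \<times> 'v::finite \<Rightarrow> real) \<Rightarrow> ('u \<Rightarrow> real) \<Rightarrow> ('u \<Rightarrow> real) \<Rightarrow> real" where
  "inner_L mu f g = (\<Sum>u\<in>UNIV. left_marg mu u * f u * g u)"

definition inner_R :: "('u::finite \<times> 'v::finite \<Rightarrow> real) \<Rightarrow> ('v \<Rightarrow> real) \<Rightarrow> ('v \<Rightarrow> real) \<Rightarrow> real" where
  "inner_R mu f g = (\<Sum>v\<in>UNIV. right_marg mu v * f v * g v)"

text \<open>Convention: the supremum of the empty set is taken to be 0 (the set is symmetric
  under g \<mapsto> -g, so when nonempty its supremum is \<ge> 0 and inserting 0 changes nothing).\<close>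

definition bip_lambda :: "('u::finite \<times> 'v::finite \<Rightarrow> real) \<Rightarrow> real" where
  "bip_lambda mu = Sup (insert 0
     {inner_L mu (bip_op mu f) g | f g.
        inner_R mu f f = 1 \<and> inner_L mu g g = 1 \<and> inner_R mu f (\<lambda>_. 1) = 0})"

definition bip_expander :: "('u::finite \<times> 'v::finite \<Rightarrow> real) \<Rightarrow> real \<Rightarrow> bool" where
  "bip_expander mu \<eta> \<longleftrightarrow> bip_lambda mu \<le> \<eta>"

text \<open>Triangles are triples (x,y,z) with x in Y[1] (type 'a), y in Y[2] (type 'b),
  z in Y[3] (type 'c); the complex is weighted by a probability distribution w on
  triangles (its support is the set of triangles Y(2)).\<close>

definition tri_dist :: "('a::finite \<times> 'b::finite \<times> 'c::finite \<Rightarrow> real) \<Rightarrow> bool" where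
  "tri_dist w \<longleftrightarrow> (\<forall>t. 0 \<le> w t) \<and> (\<Sum>t\<in>UNIV. w t) = 1"

definition edges12 :: "('a::finite \<times> 'b::finite \<times> 'c::finite \<Rightarrow> real) \<Rightarrow> 'a \<times> 'b \<Rightarrow> real" where
  "edges12 w = (\<lambda>(x, y). \<Sum>z\<in>UNIV. w (x, y, z))"

definition edges13 :: "('a::finite \<times> 'b::finite \<times> 'c::finite \<Rightarrow> real) \<Rightarrow> 'a \<times> 'c \<Rightarrow> real" where
  "edges13 w = (\<lambda>(x, z). \<Sum>y\<in>UNIV. w (x, y, z))"

definition edges23 :: "('a::finite \<times> 'b::finite \<times> 'c::finite \<Rightarrow> real) \<Rightarrow> 'b \<times> 'c \<Rightarrow> real" where
  "edges23 w = (\<lambda>(y, z). \<Sum>x\<in>UNIV. w (x, y, z))"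

definition vert1 :: "('a::finite \<times> 'b::finite \<times> 'c::finite \<Rightarrow> real) \<Rightarrow> 'a \<Rightarrow> real" where
  "vert1 w x = (\<Sum>y\<in>UNIV. \<Sum>z\<in>UNIV. w (x, y, z))"

text \<open>Link of x in Y[1]: the bipartite graph between Y_x[2] and Y_x[3] with the
  conditional distribution of the triangles containing x.\<close>

definition link1 :: "('a::finite \<times> 'b::finite \<times> 'c::finite \<Rightarrow> real) \<Rightarrow> 'a \<Rightarrow> 'b \<times> 'c \<Rightarrow> real" where
  "link1 w x = (\<lambda>(y, z). w (x, y, z) / vert1 w x)"

end

theory Submission imports Defs begin

definition SS :: "('u::finite \<times> 'v::finite \<Rightarrow> real) \<Rightarrow> ('v \<Rightarrow> real) \<Rightarrow> ('u \<Rightarrow> real) \<Rightarrow> real" where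
  "SS mu f g = (\<Sum>u\<in>UNIV. \<Sum>v\<in>UNIV. mu (u,v) * f v * g u)"

lemma lm_nonneg: "(\<forall>x. 0 \<le> mu x) \<Longrightarrow> 0 \<le> left_marg mu u"
  unfolding left_marg_def by (simp add: sum_nonneg)
lemma rm_nonneg: "(\<forall>x. 0 \<le> mu x) \<Longrightarrow> 0 \<le> right_marg mu v"
  unfolding right_marg_def by (simp add: sum_nonneg)
lemma lm_zero: "(\<forall>x. 0 \<le> mu x) \<Longrightarrow> left_marg mu u = 0 \<Longrightarrow> mu (u,v) = 0"
  unfolding left_marg_def using sum_nonneg_eq_0_iff[of UNIV "\<lambda>v. mu (u,v)"] by auto
lemma rm_zero: "(\<forall>x. 0 \<le> mu x) \<Longrightarrow> right_marg mu v = 0 \<Longrightarrow> mu (u,v) = 0"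
  unfolding right_marg_def using sum_nonneg_eq_0_iff[of UNIV "\<lambda>u. mu (u,v)"] by auto

lemma L0: assumes "\<forall>x. 0 \<le> mu x"
  shows "inner_L mu (bip_op mu f) g = SS mu f g"
  unfolding inner_L_def bip_op_def SS_def
proof (rule sum.cong[OF refl])
  fix u
  show "left_marg mu u * ((\<Sum>v\<in>UNIV. mu (u, v) * f v) / left_marg mu u) * g u = (\<Sum>v\<in>UNIV. mu (u,v) * f v * g u)"
  proof (cases "left_marg mu u = 0")
    case True then show ?thesis using lm_zero[OF assms True] by simp
  next
    case False then show ?thesis by (simp add: sum_distrib_right)
  qed
qed

lemma iR_expand: "inner_R mu f h = (\<Sum>u\<in>UNIV. \<Sum>v\<in>UNIV. mu (u,v) * f v * h v)"
  unfolding inner_R_def right_marg_def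
  by (subst sum.swap) (simp add: sum_distrib_right)

lemma iL_expand: "inner_L mu g h = (\<Sum>u\<in>UNIV. \<Sum>v\<in>UNIV. mu (u,v) * g u * h u)"
  unfolding inner_L_def left_marg_def
  by (simp add: sum_distrib_right)

lemma amgm_S: assumes "\<forall>x. 0 \<le> mu x"
  shows "SS mu f g \<le> (inner_R mu f f + inner_L mu g g) / 2"
proof -
  have "SS mu f g \<le> (\<Sum>u\<in>UNIV. \<Sum>v\<in>UNIV. (mu (u,v) * f v * f v + mu (u,v) * g u * g u) / 2)"
    unfolding SS_def
  proof (intro sum_mono)
    fix u v
    have "0 \<le> mu (u,v) * (f v - g u)^2" using assms by simp
    then show "mu (u, v) * f v * g u \<le> (mu (u, v) * f v * f v + mu (u, v) * g u * g u) / 2"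
      by (simp add: power2_eq_square algebra_simps)
  qed
  also have "\<dots> = (inner_R mu f f + inner_L mu g g) / 2"
    unfolding iR_expand iL_expand by (simp add: sum.distrib sum_divide_distrib[symmetric])
  finally show ?thesis .
qed

lemma zeroR: assumes "\<forall>x. 0 \<le> mu x" and "inner_R mu f f = 0"
  shows "SS mu f g = 0"
proof -
  have "\<forall>v\<in>UNIV. right_marg mu v * f v * f v = 0"
    using assms(2) unfolding inner_R_def
    using rm_nonneg[OF assms(1)] by (subst sum_nonneg_eq_0_iff[symmetric]) (auto intro!: sum_nonneg simp: mult.assoc)
  then have "mu (u,v) * f v = 0" for u v
    using rm_zero[OF assms(1), of v u] by (cases "right_marg mu v = 0") auto
  then have z: "mu (u,v) * f v * g u = 0" for u v by simp
  show ?thesis unfolding SS_def by (simp only: z sum.neutral_const)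
qed

lemma zeroL: assumes "\<forall>x. 0 \<le> mu x" and "inner_L mu g g = 0"
  shows "SS mu f g = 0"
proof -
  have "\<forall>u\<in>UNIV. left_marg mu u * g u * g u = 0"
    using assms(2) unfolding inner_L_def
    using lm_nonneg[OF assms(1)] by (subst sum_nonneg_eq_0_iff[symmetric]) (auto intro!: sum_nonneg simp: mult.assoc)
  then have "mu (u,v) * g u = 0" for u v
    using lm_zero[OF assms(1), of u v] by (cases "left_marg mu u = 0") auto
  then have z: "mu (u,v) * f v * g u = 0" for u v by (metis mult.commute mult.left_commute mult_zero_left)
  show ?thesis unfolding SS_def by (simp only: z sum.neutral_const)
qed

lemma iR_nonneg: "(\<forall>x. 0 \<le> mu x) \<Longrightarrow> 0 \<le> inner_R mu f f"
  unfolding inner_R_def using rm_nonneg[of mu] by (auto intro!: sum_nonneg simp: mult.assoc)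
lemma iL_nonneg: "(\<forall>x. 0 \<le> mu x) \<Longrightarrow> 0 \<le> inner_L mu f f"
  unfolding inner_L_def using lm_nonneg[of mu] by (auto intro!: sum_nonneg simp: mult.assoc)

lemma lam_bdd: assumes "\<forall>x. 0 \<le> mu x"
  shows "bdd_above (insert 0 {inner_L mu (bip_op mu f) g | f g.
        inner_R mu f f = 1 \<and> inner_L mu g g = 1 \<and> inner_R mu f (\<lambda>_. 1) = 0})"
proof (rule bdd_aboveI[of _ 1])
  fix x assume "x \<in> insert 0 {inner_L mu (bip_op mu f) g | f g.
        inner_R mu f f = 1 \<and> inner_L mu g g = 1 \<and> inner_R mu f (\<lambda>_. 1) = 0}"
  then show "x \<le> 1"
  proof
    assume "x \<in> {inner_L mu (bip_op mu f) g | f g.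
        inner_R mu f f = 1 \<and> inner_L mu g g = 1 \<and> inner_R mu f (\<lambda>_. 1) = 0}"
    then obtain f g where "x = inner_L mu (bip_op mu f) g" "inner_R mu f f = 1" "inner_L mu g g = 1" by blast
    then show ?thesis using amgm_S[OF assms, of f g] L0[OF assms, of f g] by simp
  qed simp
qed

lemma lam_nonneg: "(\<forall>x. 0 \<le> mu x) \<Longrightarrow> 0 \<le> bip_lambda mu"
  unfolding bip_lambda_def by (rule cSup_upper[OF _ lam_bdd]) auto

lemma lam_upper: assumes "\<forall>x. 0 \<le> mu x"
  and "inner_R mu f f = 1" "inner_L mu g g = 1" "inner_R mu f (\<lambda>_. 1) = 0"
  shows "inner_L mu (bip_op mu f) g \<le> bip_lambda mu"
  unfolding bip_lambda_def by (rule cSup_upper[OF _ lam_bdd[OF assms(1)]]) (use assms in blast)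

lemma L3: assumes nn: "\<forall>x. 0 \<le> mu x" and orth: "inner_R mu f (\<lambda>_. 1) = 0"
  shows "SS mu f g \<le> bip_lambda mu * sqrt (inner_R mu f f) * sqrt (inner_L mu g g)"
proof -
  define a where "a = sqrt (inner_R mu f f)"
  define b where "b = sqrt (inner_L mu g g)"
  have lnn: "0 \<le> bip_lambda mu" by (rule lam_nonneg[OF nn])
  show ?thesis
  proof (cases "a = 0 \<or> b = 0")
    case True
    then have "inner_R mu f f = 0 \<or> inner_L mu g g = 0"
      unfolding a_def b_def using iR_nonneg[OF nn] iL_nonneg[OF nn] by auto
    then have "SS mu f g = 0" using zeroR[OF nn, of f g] zeroL[OF nn, of g f] by blast
    then show ?thesis using True lnn unfolding a_def[symmetric] b_def[symmetric] by auto
  next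
    case False
    then have ap: "a > 0" and bp: "b > 0" unfolding a_def b_def
      using iR_nonneg[OF nn, of f] iL_nonneg[OF nn, of g] by (auto simp: less_eq_real_def)
    have a2: "a * a = inner_R mu f f" unfolding a_def using iR_nonneg[OF nn, of f] by simp
    have b2: "b * b = inner_L mu g g" unfolding b_def using iL_nonneg[OF nn, of g] by simp
    define f' where "f' = (\<lambda>v. f v / a)"
    define g' where "g' = (\<lambda>u. g u / b)"
    have "inner_R mu f' f' = inner_R mu f f / (a * a)"
      unfolding inner_R_def f'_def by (simp add: sum_divide_distrib)
    then have 1: "inner_R mu f' f' = 1" using a2 ap mult_pos_pos[OF ap ap] by simp
    have "inner_L mu g' g' = inner_L mu g g / (b * b)"
      unfolding inner_L_def g'_def by (simp add: sum_divide_distrib)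
    then have 2: "inner_L mu g' g' = 1" using b2 bp mult_pos_pos[OF bp bp] by simp
    have "inner_R mu f' (\<lambda>_. 1) = inner_R mu f (\<lambda>_. 1) / a"
      unfolding inner_R_def f'_def by (simp add: sum_divide_distrib)
    then have 3: "inner_R mu f' (\<lambda>_. 1) = 0" using orth by simp
    have "SS mu f' g' = SS mu f g / (a * b)"
      unfolding SS_def f'_def g'_def by (simp add: sum_divide_distrib)
    moreover have "SS mu f' g' \<le> bip_lambda mu"
      using lam_upper[OF nn 1 2 3] L0[OF nn] by simp
    ultimately have "SS mu f g / (a*b) \<le> bip_lambda mu" by simp
    then have "SS mu f g \<le> bip_lambda mu * (a * b)" using ap bp by (simp add: divide_le_eq)
    then show ?thesis unfolding a_def b_def by (simp add: mult.assoc)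
  qed
qed

lemma shift: "SS mu (\<lambda>v. f v - c) g = SS mu f g - c * (\<Sum>u\<in>UNIV. left_marg mu u * g u)"
  unfolding SS_def left_marg_def
  by (simp add: algebra_simps sum_subtractf sum_distrib_left sum_distrib_right)

lemma variance: assumes nn: "\<forall>x. 0 \<le> mu x" and tot: "(\<Sum>v\<in>UNIV. right_marg mu v) = 1"
  and c: "c = (\<Sum>v\<in>UNIV. right_marg mu v * h v)"
  shows "inner_R mu (\<lambda>v. h v - c) (\<lambda>v. h v - c) \<le> inner_R mu h h"
    and "inner_R mu (\<lambda>v. h v - c) (\<lambda>_. 1) = 0"
proof -
  have "inner_R mu (\<lambda>v. h v - c) (\<lambda>v. h v - c) = inner_R mu h h - 2*c*(\<Sum>v\<in>UNIV. right_marg mu v * h v) + c*c*(\<Sum>v\<in>UNIV. right_marg mu v)"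
    unfolding inner_R_def by (simp add: algebra_simps sum.distrib sum_subtractf sum_distrib_left)
  then have "inner_R mu (\<lambda>v. h v - c) (\<lambda>v. h v - c) = inner_R mu h h - c*c" using tot c by simp
  then show "inner_R mu (\<lambda>v. h v - c) (\<lambda>v. h v - c) \<le> inner_R mu h h" by simp
  have "inner_R mu (\<lambda>v. h v - c) (\<lambda>_. 1) = (\<Sum>v\<in>UNIV. right_marg mu v * h v) - c * (\<Sum>v\<in>UNIV. right_marg mu v)"
    unfolding inner_R_def by (simp add: algebra_simps sum_subtractf sum_distrib_left)
  then show "inner_R mu (\<lambda>v. h v - c) (\<lambda>_. 1) = 0" using tot c by simp
qed


lemma sqrt_amgm: "0 \<le> a \<Longrightarrow> 0 \<le> b \<Longrightarrow> sqrt a * sqrt b \<le> (a + b) / 2"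
proof -
  assume a: "0 \<le> a" and b: "0 \<le> b"
  have "0 \<le> (sqrt a - sqrt b)^2" by simp
  then show ?thesis using a b by (simp add: power2_eq_square algebra_simps)
qed

theorem lemma4p9:
  fixes w :: "'a::finite \<times> 'b::finite \<times> 'c::finite \<Rightarrow> real" and \<eta> :: real
  assumes "tri_dist w"
    and "\<And>x. vert1 w x > 0 \<Longrightarrow> bip_expander (link1 w x) \<eta>"
  shows "bip_lambda (edges23 w) \<le> \<eta> + bip_lambda (edges12 w) * bip_lambda (edges13 w)"
proof -
  have wn: "\<And>t. 0 \<le> w t" and wt: "(\<Sum>t\<in>UNIV. w t) = 1" using assms(1) unfolding tri_dist_def by auto
  define p where "p = vert1 w"
  define E12 where "E12 = edges12 w"
  define E13 where "E13 = edges13 w"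
  define E23 where "E23 = edges23 w"
  have E12v: "E12 (x,y) = (\<Sum>z\<in>UNIV. w (x,y,z))" for x y unfolding E12_def edges12_def by simp
  have E13v: "E13 (x,z) = (\<Sum>y\<in>UNIV. w (x,y,z))" for x z unfolding E13_def edges13_def by simp
  have E23v: "E23 (y,z) = (\<Sum>x\<in>UNIV. w (x,y,z))" for y z unfolding E23_def edges23_def by simp
  have pv: "p x = (\<Sum>y\<in>UNIV. \<Sum>z\<in>UNIV. w (x,y,z))" for x unfolding p_def vert1_def by simp
  have n12: "\<forall>t. 0 \<le> E12 t" using wn by (auto simp: E12v intro!: sum_nonneg)
  have n13: "\<forall>t. 0 \<le> E13 t" using wn by (auto simp: E13v intro!: sum_nonneg)
  have n23: "\<forall>t. 0 \<le> E23 t" using wn by (auto simp: E23v intro!: sum_nonneg)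
  have pn: "0 \<le> p x" for x using wn by (auto simp: pv intro!: sum_nonneg)
  have nL: "\<forall>t. 0 \<le> link1 w x t" for x
    using wn pn unfolding p_def by (auto simp: link1_def)
  have lm12: "left_marg E12 x = p x" for x unfolding left_marg_def by (simp add: E12v pv)
  have lm13: "left_marg E13 x = p x" for x unfolding left_marg_def E13v pv by (rule sum.swap)
  have rm13: "right_marg E13 z = right_marg E23 z" for z
    unfolding right_marg_def E13v E23v by (rule sum.swap)
  have rm12: "right_marg E12 y = left_marg E23 y" for y
    unfolding right_marg_def left_marg_def E12v E23v by (rule sum.swap)
  have wsum: "(\<Sum>x\<in>UNIV. \<Sum>y\<in>UNIV. \<Sum>z\<in>UNIV. w (x,y,z)) = 1"
    using wt by (simp add: sum.cartesian_product UNIV_Times_UNIV[symmetric] del: UNIV_Times_UNIV)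
  have psum: "(\<Sum>x\<in>UNIV. p x) = 1" using wsum by (simp add: pv)
  have tot12: "(\<Sum>y\<in>UNIV. right_marg E12 y) = 1"
  proof -
    have "(\<Sum>y\<in>UNIV. right_marg E12 y) = (\<Sum>y\<in>UNIV. \<Sum>x\<in>UNIV. \<Sum>z\<in>UNIV. w (x,y,z))"
      unfolding right_marg_def by (simp add: E12v)
    also have "\<dots> = (\<Sum>x\<in>UNIV. \<Sum>y\<in>UNIV. \<Sum>z\<in>UNIV. w (x,y,z))" by (rule sum.swap)
    finally show ?thesis using wsum by simp
  qed
  have rmL: "right_marg (link1 w x) z = E13 (x,z) / p x" for x z
    unfolding right_marg_def link1_def p_def[symmetric] by (simp add: E13v sum_divide_distrib)
  have lmL: "left_marg (link1 w x) y = E12 (x,y) / p x" for x y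
    unfolding left_marg_def link1_def p_def[symmetric] by (simp add: E12v sum_divide_distrib)
  have eta: "0 \<le> \<eta>"
  proof -
    obtain x where "p x > 0"
    proof (rule ccontr)
      assume "\<not> thesis"
      then have "p x = 0" for x using pn[of x] that[of x] by (auto simp: less_eq_real_def)
      then show False using psum by simp
    qed
    then have "bip_lambda (link1 w x) \<le> \<eta>" using assms(2) unfolding p_def bip_expander_def by blast
    moreover have "0 \<le> bip_lambda (link1 w x)" by (rule lam_nonneg[OF nL])
    ultimately show ?thesis by simp
  qed
  have l12: "0 \<le> bip_lambda E12" by (rule lam_nonneg[OF n12])
  have l13: "0 \<le> bip_lambda E13" by (rule lam_nonneg[OF n13])
  have main: "inner_L E23 (bip_op E23 f) g \<le> \<eta> + bip_lambda E12 * bip_lambda E13"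
    if f1: "inner_R E23 f f = 1" and g1: "inner_L E23 g g = 1" and fo: "inner_R E23 f (\<lambda>_. 1) = 0"
    for f g
  proof -
    define F where "F = bip_op E13 f"
    define G where "G = bip_op E12 g"
    define T where "T x = (\<Sum>y\<in>UNIV. \<Sum>z\<in>UNIV. w (x,y,z) * f z * g y)" for x
    have val: "inner_L E23 (bip_op E23 f) g = (\<Sum>x\<in>UNIV. T x)"
    proof -
      have "inner_L E23 (bip_op E23 f) g = (\<Sum>y\<in>UNIV. \<Sum>z\<in>UNIV. \<Sum>x\<in>UNIV. w (x,y,z) * f z * g y)"
        unfolding L0[OF n23] SS_def by (simp add: E23v sum_distrib_right)
      also have "\<dots> = (\<Sum>y\<in>UNIV. \<Sum>x\<in>UNIV. \<Sum>z\<in>UNIV. w (x,y,z) * f z * g y)"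
        by (rule sum.cong[OF refl], rule sum.swap)
      also have "\<dots> = (\<Sum>x\<in>UNIV. T x)" unfolding T_def by (rule sum.swap)
      finally show ?thesis .
    qed
    have perx: "T x \<le> \<eta> / 2 * ((\<Sum>z\<in>UNIV. E13 (x,z) * f z * f z) + (\<Sum>y\<in>UNIV. E12 (x,y) * g y * g y))
                  + p x * F x * G x" for x
    proof (cases "p x = 0")
      case True
      have e12: "E12 (x,y) = 0" for y using lm_zero[OF n12] lm12 True by simp
      have e13: "E13 (x,z) = 0" for z using lm_zero[OF n13] lm13 True by simp
      have "w (x,y,z) = 0" for y z
        using e12[of y] wn sum_nonneg_eq_0_iff[of UNIV "\<lambda>z. w (x,y,z)"] by (auto simp: E12v)
      then have "T x = 0" unfolding T_def by simp
      then show ?thesis using e12 e13 True by simp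
    next
      case False
      then have pp: "p x > 0" using pn[of x] by simp
      define L where "L = link1 w x"
      have lamL: "bip_lambda L \<le> \<eta>" using assms(2) pp unfolding L_def p_def bip_expander_def by simp
      have nL': "\<forall>t. 0 \<le> L t" unfolding L_def using nL by simp
      have Tx: "T x = p x * SS L f g"
        unfolding T_def SS_def L_def link1_def p_def[symmetric] using pp
        by (simp add: sum_distrib_left)
      define c where "c = (\<Sum>z\<in>UNIV. right_marg L z * f z)"
      have cF: "c = F x" unfolding c_def F_def bip_op_def lm13 L_def rmL
        by (simp add: sum_divide_distrib)
      have dG: "(\<Sum>y\<in>UNIV. left_marg L y * g y) = G x" unfolding G_def bip_op_def lm12 L_def lmL
        by (simp add: sum_divide_distrib)
      have totL: "(\<Sum>z\<in>UNIV. right_marg L z) = 1" unfolding L_def rmL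
        using pp lm13[of x] unfolding left_marg_def by (simp add: sum_divide_distrib[symmetric])
      note var = variance[OF nL' totL c_def]
      have sh: "SS L f g = SS L (\<lambda>z. f z - c) g + c * G x"
        using shift[of L f c g] dG by simp
      have "SS L (\<lambda>z. f z - c) g \<le> bip_lambda L * sqrt (inner_R L (\<lambda>z. f z - c) (\<lambda>z. f z - c)) * sqrt (inner_L L g g)"
        by (rule L3[OF nL' var(2)])
      also have "\<dots> \<le> \<eta> * sqrt (inner_R L f f) * sqrt (inner_L L g g)"
        by (intro mult_mono lamL real_sqrt_le_mono var(1)) (auto simp: eta lam_nonneg[OF nL'] iR_nonneg[OF nL'] iL_nonneg[OF nL'])
      also have "\<dots> \<le> \<eta> * ((inner_R L f f + inner_L L g g) / 2)"
        unfolding mult.assoc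
        by (intro mult_left_mono sqrt_amgm iR_nonneg[OF nL'] iL_nonneg[OF nL'] eta)
      finally have b: "SS L (\<lambda>z. f z - c) g \<le> \<eta> * ((inner_R L f f + inner_L L g g) / 2)" .
      have pR: "p x * inner_R L f f = (\<Sum>z\<in>UNIV. E13 (x,z) * f z * f z)"
        unfolding inner_R_def L_def rmL using pp by (simp add: sum_distrib_left)
      have pL: "p x * inner_L L g g = (\<Sum>y\<in>UNIV. E12 (x,y) * g y * g y)"
        unfolding inner_L_def L_def lmL using pp by (simp add: sum_distrib_left)
      have "T x = p x * SS L (\<lambda>z. f z - c) g + p x * F x * G x"
        using Tx sh cF by (simp add: algebra_simps)
      also have "\<dots> \<le> p x * (\<eta> * ((inner_R L f f + inner_L L g g) / 2)) + p x * F x * G x"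
        using b pp by simp
      also have "\<dots> = \<eta> / 2 * (p x * inner_R L f f + p x * inner_L L g g) + p x * F x * G x"
        by (simp add: algebra_simps)
      finally show ?thesis unfolding pR pL .
    qed
    have s1: "(\<Sum>x\<in>UNIV. \<Sum>z\<in>UNIV. E13 (x,z) * f z * f z) = 1"
      using f1 unfolding iR_expand[symmetric] inner_R_def rm13 .
    have s2: "(\<Sum>x\<in>UNIV. \<Sum>y\<in>UNIV. E12 (x,y) * g y * g y) = 1"
      using g1 unfolding iR_expand[symmetric] inner_R_def rm12 inner_L_def .
    have "(\<Sum>x\<in>UNIV. T x) \<le> (\<Sum>x\<in>UNIV. \<eta> / 2 * ((\<Sum>z\<in>UNIV. E13 (x,z) * f z * f z) + (\<Sum>y\<in>UNIV. E12 (x,y) * g y * g y))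
                  + p x * F x * G x)"
      by (rule sum_mono) (rule perx)
    also have "\<dots> = \<eta> / 2 * ((\<Sum>x\<in>UNIV. \<Sum>z\<in>UNIV. E13 (x,z) * f z * f z) + (\<Sum>x\<in>UNIV. \<Sum>y\<in>UNIV. E12 (x,y) * g y * g y)) + (\<Sum>x\<in>UNIV. p x * F x * G x)"
      by (simp only: sum.distrib sum_distrib_left distrib_left)
    also have "\<dots> = \<eta> + (\<Sum>x\<in>UNIV. p x * F x * G x)"
      using s1 s2 by simp
    finally have A: "inner_L E23 (bip_op E23 f) g \<le> \<eta> + (\<Sum>x\<in>UNIV. p x * F x * G x)"
      using val by simp
    define cg where "cg = (\<Sum>y\<in>UNIV. right_marg E12 y * g y)"
    note var2 = variance[OF n12 tot12 cg_def]
    have PFG: "(\<Sum>x\<in>UNIV. p x * F x * G x) = SS E12 g F"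
      unfolding L0[OF n12, symmetric] inner_L_def lm12 G_def
      by (simp add: algebra_simps)
    have zero: "(\<Sum>x\<in>UNIV. left_marg E12 x * F x) = 0"
    proof -
      have "(\<Sum>x\<in>UNIV. left_marg E12 x * F x) = inner_L E13 F (\<lambda>_. 1)"
        unfolding inner_L_def lm12 lm13 by simp
      also have "\<dots> = SS E13 f (\<lambda>_. 1)" unfolding F_def by (rule L0[OF n13])
      also have "\<dots> = inner_R E13 f (\<lambda>_. 1)" unfolding SS_def iR_expand by simp
      also have "\<dots> = 0" using fo unfolding inner_R_def rm13 .
      finally show ?thesis .
    qed
    have "SS E12 g F = SS E12 (\<lambda>y. g y - cg) F" using shift[of E12 g cg F] zero by simp
    define N where "N = inner_L E13 F F"
    have Nn: "0 \<le> N" unfolding N_def by (rule iL_nonneg[OF n13])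
    have "N = SS E13 f F" unfolding N_def F_def by (rule L0[OF n13])
    also have "\<dots> \<le> bip_lambda E13 * sqrt (inner_R E13 f f) * sqrt (inner_L E13 F F)"
      by (rule L3[OF n13]) (use fo in \<open>simp add: inner_R_def rm13\<close>)
    also have "inner_R E13 f f = 1" using f1 by (simp add: inner_R_def rm13)
    finally have "N \<le> bip_lambda E13 * sqrt N" unfolding N_def by simp
    then have sN: "sqrt N \<le> bip_lambda E13"
    proof (cases "sqrt N = 0")
      case True then show ?thesis using l13 by simp
    next
      case False
      assume h: "N \<le> bip_lambda E13 * sqrt N"
      have "sqrt N * sqrt N \<le> bip_lambda E13 * sqrt N" using h Nn by simp
      moreover have "sqrt N > 0" using False Nn by simp
      ultimately show ?thesis by (rule mult_right_le_imp_le)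
    qed
    have N12: "inner_L E12 F F = N" unfolding N_def inner_L_def lm12 lm13 ..
    have g0: "sqrt (inner_R E12 (\<lambda>y. g y - cg) (\<lambda>y. g y - cg)) \<le> 1"
    proof -
      have "inner_R E12 g g = 1" using g1 by (simp add: inner_R_def rm12 inner_L_def)
      then show ?thesis using var2(1) by simp
    qed
    have "SS E12 (\<lambda>y. g y - cg) F \<le> bip_lambda E12 * sqrt (inner_R E12 (\<lambda>y. g y - cg) (\<lambda>y. g y - cg)) * sqrt N"
      using L3[OF n12 var2(2), of F] N12 by simp
    also have "\<dots> \<le> bip_lambda E12 * 1 * bip_lambda E13"
      by (intro mult_mono g0 sN l12 order_refl) (auto simp: l12 Nn iR_nonneg[OF n12])
    finally have B: "(\<Sum>x\<in>UNIV. p x * F x * G x) \<le> bip_lambda E12 * bip_lambda E13"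
      using PFG \<open>SS E12 g F = _\<close> by simp
    show ?thesis using A B by simp
  qed
  show ?thesis
    unfolding E23_def[symmetric] E12_def[symmetric] E13_def[symmetric] bip_lambda_def[of E23]
  proof (rule cSup_least)
    fix x assume "x \<in> insert 0 {inner_L E23 (bip_op E23 f) g | f g.
        inner_R E23 f f = 1 \<and> inner_L E23 g g = 1 \<and> inner_R E23 f (\<lambda>_. 1) = 0}"
    then show "x \<le> \<eta> + bip_lambda E12 * bip_lambda E13"
      using main eta l12 l13 by auto
  qed simp
qed

end
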